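(* For $n\ge 2$, let $\mathsf{\Lambda}^2(\mathbb{C}^n)$ be the space of $n\times n$ complex skew-symmetric matrices and $\mu$ the structure tensor of the skew-symmetric matrix-vector product $\mathsf{\Lambda}^2(\mathbb{C}^n)\times\mathbb{C}^n\to\mathbb{C}^n$, $(A,x)\mapsto Ax$. Then $\operatorname{rank}(\mu)\le n^2-n-\lceil (n-1)/2\rceil+1$.
   Context: Structure tensor of a bilinear map $\beta:U\times V\to W$: the unique $\mu_\beta\in U^*\otimes V^*\otimes W$ with $\beta(u,v)=\mu_\beta(u,v,\cdot)$. Rank: least number of decomposable tensors summing to the tensor. *)

theory Defs
  imports "HOL-Analysis.Analysis"
begin

definition skew_mats :: "(complex^'n^'n) set" where
  "skew_mats = {A. transpose A = - A}"

definition mat_smul :: "complex \<Rightarrow> complex^'n^'m \<Rightarrow> complex^'n^'m" where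
  "mat_smul c A = (\<chi> i j. c * A $ i $ j)"

definition skew_functional :: "(complex^'n^'n \<Rightarrow> complex) \<Rightarrow> bool" where
  "skew_functional f \<longleftrightarrow>
     (\<forall>A\<in>skew_mats. \<forall>B\<in>skew_mats. f (A + B) = f A + f B) \<and>
     (\<forall>A\<in>skew_mats. \<forall>c. f (mat_smul c A) = c * f A)"

definition vec_functional :: "(complex^'n \<Rightarrow> complex) \<Rightarrow> bool" where
  "vec_functional g \<longleftrightarrow>
     (\<forall>x y. g (x + y) = g x + g y) \<and> (\<forall>c x. g (c *s x) = c * g x)"

text \<open>The structure tensor of (A,x) |-> A x, an element of U^* (x) V^* (x) W, is a sum of r
  decomposable tensors a_i (x) b_i (x) w_i iff A x = sum_i a_i(A) b_i(x) w_i for all A in U, x in V.\<close>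
definition skew_mv_decomp :: "nat \<Rightarrow> ('n::finite) itself \<Rightarrow> bool" where
  "skew_mv_decomp r _ \<longleftrightarrow>
     (\<exists>(a :: nat \<Rightarrow> complex^'n^'n \<Rightarrow> complex) (b :: nat \<Rightarrow> complex^'n \<Rightarrow> complex)
        (w :: nat \<Rightarrow> complex^'n).
        (\<forall>i<r. skew_functional (a i) \<and> vec_functional (b i)) \<and>
        (\<forall>A\<in>skew_mats. \<forall>x. A *v x = (\<Sum>i<r. (a i A * b i x) *s w i)))"

definition skew_mv_rank :: "('n::finite) itself \<Rightarrow> nat" where
  "skew_mv_rank t = (LEAST r. skew_mv_decomp r t)"

end

theory Submission
  imports Defs
begin

lemma decomp_from_set:
  fixes I :: "'i set"
    and a :: "'i \<Rightarrow> complex^'n^'n \<Rightarrow> complex"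
    and b :: "'i \<Rightarrow> complex^'n::finite \<Rightarrow> complex"
    and w :: "'i \<Rightarrow> complex^'n"
  assumes fin: "finite I"
    and lin: "\<forall>i\<in>I. skew_functional (a i) \<and> vec_functional (b i)"
    and eq: "\<forall>A\<in>skew_mats. \<forall>x. A *v x = (\<Sum>i\<in>I. (a i A * b i x) *s w i)"
  shows "skew_mv_decomp (card I) TYPE('n)"
proof -
  obtain h where h: "bij_betw h {0..<card I} I" using ex_bij_betw_nat_finite[OF fin] by blast
  have hI: "\<And>i. i < card I \<Longrightarrow> h i \<in> I" using h by (auto simp: bij_betw_def)
  have L: "\<forall>i<card I. skew_functional ((a \<circ> h) i) \<and> vec_functional ((b \<circ> h) i)"
    using lin hI by auto
  have E: "\<forall>A\<in>skew_mats. \<forall>x. A *v x = (\<Sum>i<card I. ((a \<circ> h) i A * (b \<circ> h) i x) *s (w \<circ> h) i)"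
  proof (intro ballI allI)
    fix A :: "complex^'n^'n" and x :: "complex^'n" assume "A \<in> skew_mats"
    hence "A *v x = (\<Sum>i\<in>I. (a i A * b i x) *s w i)" using eq by blast
    also have "\<dots> = (\<Sum>i\<in>{0..<card I}. (a (h i) A * b (h i) x) *s w (h i))"
      using sum.reindex_bij_betw[OF h, of "\<lambda>i. (a i A * b i x) *s w i"] by simp
    finally show "A *v x = (\<Sum>i<card I. ((a \<circ> h) i A * (b \<circ> h) i x) *s (w \<circ> h) i)"
      by (simp add: atLeast0LessThan)
  qed
  show ?thesis unfolding skew_mv_decomp_def using L E by blast
qed

lemma rank_le: "skew_mv_decomp r TYPE('n::finite) \<Longrightarrow> skew_mv_rank TYPE('n) \<le> r"
  unfolding skew_mv_rank_def by (rule Least_le)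

lemma skew_entry: "A \<in> skew_mats \<Longrightarrow> A $ j $ i = - (A $ i $ j)"
proof -
  assume "A \<in> skew_mats"
  hence "transpose A = - A" by (simp add: skew_mats_def)
  hence "transpose A $ i $ j = (- A) $ i $ j" by simp
  thus ?thesis by (simp add: transpose_def)
qed

lemma skew_diag: "A \<in> skew_mats \<Longrightarrow> A $ i $ i = (0::complex)"
  using skew_entry[of A i i] by simp

lemma sf_entry: "skew_functional (\<lambda>A. A $ i $ j)"
  by (simp add: skew_functional_def mat_smul_def)

lemma vf_comp: "vec_functional (\<lambda>x. x $ i)"
  by (simp add: vec_functional_def)

lemma vf_comp2: "vec_functional (\<lambda>x. x $ i + x $ j)"
  by (simp add: vec_functional_def algebra_simps)


definition genum :: "nat \<Rightarrow> 'n::finite" where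
  "genum = (SOME g. bij_betw g {..<CARD('n)} (UNIV::'n set))"

lemma genum_bij: "bij_betw (genum :: nat \<Rightarrow> 'n::finite) {..<CARD('n)} UNIV"
proof -
  have "\<exists>g. bij_betw g {..<CARD('n)} (UNIV::'n set)"
    using ex_bij_betw_nat_finite[of "UNIV::'n set"] by (auto simp: atLeast0LessThan)
  thus ?thesis unfolding genum_def by (rule someI_ex)
qed

lemma genum_inj: "p < CARD('n) \<Longrightarrow> m < CARD('n) \<Longrightarrow> (genum p :: 'n::finite) = genum m \<longleftrightarrow> p = m"
  using genum_bij[where 'n='n] by (auto simp: bij_betw_def inj_on_def)

lemma genum_surj: "\<exists>m<CARD('n). genum m = (i::'n::finite)"
  using genum_bij[where 'n='n] unfolding bij_betw_def by (metis UNIV_I imageE lessThan_iff)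

lemma genum_mv: "(A *v (x::complex^'n::finite)) $ genum m = (\<Sum>q<CARD('n). A$genum m$genum q * x$genum q)"
  using sum.reindex_bij_betw[OF genum_bij[where 'n='n], of "\<lambda>j. A$genum m$j * x$j"]
  by (simp add: matrix_vector_mult_def)

lemma trivial_decomp:
  "skew_mv_decomp (card (SIGMA p:{..<CARD('n)}. {..<CARD('n)} - {p})) TYPE('n::finite)"
proof -
  let ?g = "genum :: nat \<Rightarrow> 'n"
  let ?S = "SIGMA p:{..<CARD('n)}. {..<CARD('n)} - {p}"
  show ?thesis
  proof (rule decomp_from_set[where a="\<lambda>(p,q) A. A$?g p$?g q" and b = "\<lambda>(p,q) x. x$?g q"
        and w = "\<lambda>(p,q). axis (?g p) 1"])
    show "finite ?S" by auto
    show "\<forall>i\<in>?S. skew_functional ((\<lambda>(p,q) A. A$?g p$?g q) i) \<and> vec_functional ((\<lambda>(p,q) x. x$?g q) i)"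
      by (auto simp: sf_entry vf_comp)
    show "\<forall>A\<in>skew_mats. \<forall>x. A *v x = (\<Sum>i\<in>?S. ((\<lambda>(p,q) A. A$?g p$?g q) i A * (\<lambda>(p,q) x. x$?g q) i x) *s (\<lambda>(p,q). axis (?g p) 1) i)"
    proof (intro ballI allI)
      fix A :: "complex^'n^'n" and x :: "complex^'n" assume A: "A \<in> skew_mats"
      show "A *v x = (\<Sum>i\<in>?S. ((\<lambda>(p,q) A. A$?g p$?g q) i A * (\<lambda>(p,q) x. x$?g q) i x) *s (\<lambda>(p,q). axis (?g p) 1) i)"
        (is "_ = ?R")
      proof (subst vec_eq_iff, intro allI)
        fix i obtain m where m: "m < CARD('n)" "?g m = i" using genum_surj by blast
        have "?R $ ?g m = (\<Sum>pq\<in>?S. (case pq of (p,q) \<Rightarrow> A$?g p$?g q * x$?g q * (if m = p then 1 else 0)))"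
          unfolding sum_component by (intro sum.cong refl) (auto simp: axis_def genum_inj m(1) m(2)[symmetric])
        also have "\<dots> = (\<Sum>p<CARD('n). \<Sum>q\<in>{..<CARD('n)} - {p}. A$?g p$?g q * x$?g q * (if m = p then 1 else 0))"
          by (rule sum.Sigma[symmetric]) auto
        also have "\<dots> = (\<Sum>p<CARD('n). if m = p then (\<Sum>q\<in>{..<CARD('n)} - {p}. A$?g p$?g q * x$?g q) else 0)"
          by (rule sum.cong) auto
        also have "\<dots> = (\<Sum>q\<in>{..<CARD('n)} - {m}. A$?g m$?g q * x$?g q)"
          using m by (simp add: sum.delta)
        also have "\<dots> = (\<Sum>q<CARD('n). A$?g m$?g q * x$?g q)"
          using m skew_diag[OF A] by (simp add: sum_diff1)
        finally have "?R $ ?g m = (\<Sum>q<CARD('n). A$?g m$?g q * x$?g q)" .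
        thus "(A *v x) $ i = ?R $ i" unfolding m(2)[symmetric] genum_mv by (rule sym)
      qed
    qed
  qed
qed


lemma times_delta: "(c::complex) * (if m = q then 1 else 0) = (if m = q then c else 0)"
  by simp

definition cdiag :: "nat \<Rightarrow> complex^'n^'n \<Rightarrow> complex" where
  "cdiag m A = (\<Sum>p<m. A$genum p$genum m) - (\<Sum>q\<in>{Suc m..<CARD('n::finite)}. A$genum m$genum q)"

lemma sf_cdiag: "skew_functional (cdiag m :: complex^'n::finite^'n \<Rightarrow> complex)"
  unfolding skew_functional_def cdiag_def
  by (simp add: mat_smul_def sum.distrib sum_distrib_left right_diff_distrib)

lemma tri_decomp:
  "skew_mv_decomp (card (SIGMA p:{..<CARD('n)}. {p..<CARD('n)})) TYPE('n::finite)"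
proof -
  let ?g = "genum :: nat \<Rightarrow> 'n"
  let ?n = "CARD('n)"
  let ?S = "SIGMA p:{..<?n}. {p..<?n}"
  let ?a = "\<lambda>(p,q) A. if p = q then cdiag p A else A$?g p$?g q"
  let ?b = "\<lambda>(p,q) x. if p = q then x$?g p else x$?g p + x$?g q"
  let ?w = "\<lambda>(p,q). if p = q then axis (?g p) 1 else axis (?g p) 1 - axis (?g q) (1::complex)"
  show ?thesis
  proof (rule decomp_from_set[where a="?a" and b = "?b" and w = "?w"])
    show "finite ?S" by auto
    show "\<forall>i\<in>?S. skew_functional (?a i) \<and> vec_functional (?b i)"
    proof
      fix i assume "i \<in> ?S"
      obtain p q where i: "i = (p,q)" by fastforce
      show "skew_functional (?a i) \<and> vec_functional (?b i)"
        unfolding i by (cases "p = q") (simp_all add: sf_entry vf_comp vf_comp2 sf_cdiag)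
    qed
    show "\<forall>A\<in>skew_mats. \<forall>x. A *v x = (\<Sum>i\<in>?S. (?a i A * ?b i x) *s ?w i)"
    proof (intro ballI allI)
      fix A :: "complex^'n^'n" and x :: "complex^'n" assume A: "A \<in> skew_mats"
      show "A *v x = (\<Sum>i\<in>?S. (?a i A * ?b i x) *s ?w i)"
        (is "_ = ?R")
      proof (subst vec_eq_iff, intro allI)
        fix i obtain m where m: "m < ?n" "?g m = i" using genum_surj by blast
        let ?T = "\<lambda>p q. if p = q then cdiag p A * x$?g p * (if m = p then 1 else 0)
             else A$?g p$?g q * (x$?g p + x$?g q) * ((if m = p then 1 else 0) - (if m = q then 1 else 0))"
        have "?R $ ?g m = (\<Sum>pq\<in>?S. (case pq of (p,q) \<Rightarrow> ?T p q))"
          unfolding sum_component by (intro sum.cong refl) (auto simp: axis_def genum_inj m(1) m(2)[symmetric])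
        also have "\<dots> = (\<Sum>p<?n. \<Sum>q\<in>{p..<?n}. ?T p q)"
          by (rule sum.Sigma[symmetric]) auto
        also have "\<dots> = (\<Sum>p<?n. ?T p p + (\<Sum>q\<in>{Suc p..<?n}. ?T p q))"
          by (intro sum.cong refl) (simp add: sum.atLeast_Suc_lessThan)
        also have "\<dots> = (\<Sum>p<?n. ?T p p) + (\<Sum>p<?n. \<Sum>q\<in>{Suc p..<?n}. ?T p q)"
          by (rule sum.distrib)
        finally have R1: "?R $ ?g m = (\<Sum>p<?n. ?T p p) + (\<Sum>p<?n. \<Sum>q\<in>{Suc p..<?n}. ?T p q)" .
        have D: "(\<Sum>p<?n. ?T p p) = cdiag m A * x$?g m"
        proof -
          have "(\<Sum>p<?n. ?T p p) = (\<Sum>p<?n. if m = p then cdiag p A * x$?g p else 0)"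
            by (intro sum.cong refl) auto
          thus ?thesis using m(1) by (simp add: sum.delta)
        qed
        have O1: "(\<Sum>p<?n. \<Sum>q\<in>{Suc p..<?n}. ?T p q)
          = (\<Sum>p<?n. \<Sum>q\<in>{Suc p..<?n}. A$?g p$?g q * (x$?g p + x$?g q) * (if m = p then 1 else 0))
          - (\<Sum>p<?n. \<Sum>q\<in>{Suc p..<?n}. A$?g p$?g q * (x$?g p + x$?g q) * (if m = q then 1 else 0))"
          by (simp add: sum_subtractf[symmetric] right_diff_distrib)
        have O2: "(\<Sum>p<?n. \<Sum>q\<in>{Suc p..<?n}. A$?g p$?g q * (x$?g p + x$?g q) * (if m = p then 1 else 0))
            = (\<Sum>q\<in>{Suc m..<?n}. A$?g m$?g q * (x$?g m + x$?g q))"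
        proof -
          have "(\<Sum>p<?n. \<Sum>q\<in>{Suc p..<?n}. A$?g p$?g q * (x$?g p + x$?g q) * (if m = p then 1 else 0))
             = (\<Sum>p<?n. if m = p then (\<Sum>q\<in>{Suc p..<?n}. A$?g p$?g q * (x$?g p + x$?g q)) else 0)"
            by (intro sum.cong refl) auto
          also have "\<dots> = (\<Sum>q\<in>{Suc m..<?n}. A$?g m$?g q * (x$?g m + x$?g q))"
            using m(1) by (simp add: sum.delta)
          finally show ?thesis .
        qed
        have O3: "(\<Sum>p<?n. \<Sum>q\<in>{Suc p..<?n}. A$?g p$?g q * (x$?g p + x$?g q) * (if m = q then 1 else 0))
            = (\<Sum>p<m. A$?g p$?g m * (x$?g p + x$?g m))"
        proof -
          have "(\<Sum>p<?n. \<Sum>q\<in>{Suc p..<?n}. A$?g p$?g q * (x$?g p + x$?g q) * (if m = q then 1 else 0))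
             = (\<Sum>p<?n. if p < m then A$?g p$?g m * (x$?g p + x$?g m) else 0)"
            using m(1) by (intro sum.cong refl) (auto simp: times_delta sum.delta sum.delta')
          also have "\<dots> = (\<Sum>p\<in>{p\<in>{..<?n}. p < m}. A$?g p$?g m * (x$?g p + x$?g m))"
            by (rule sum.inter_filter[symmetric]) auto
          also have "{p\<in>{..<?n}. p < m} = {..<m}" using m(1) by auto
          finally show ?thesis .
        qed
        have L: "(\<Sum>q<?n. A$?g m$?g q * x$?g q)
           = (\<Sum>p<m. A$?g m$?g p * x$?g p) + (\<Sum>q\<in>{Suc m..<?n}. A$?g m$?g q * x$?g q)"
        proof -
          have "(\<Sum>q<?n. A$?g m$?g q * x$?g q) = (\<Sum>q\<in>{0..<m}. A$?g m$?g q * x$?g q) + (\<Sum>q\<in>{m..<?n}. A$?g m$?g q * x$?g q)"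
            using m(1) by (simp add: atLeast0LessThan[symmetric] sum.atLeastLessThan_concat)
          also have "(\<Sum>q\<in>{m..<?n}. A$?g m$?g q * x$?g q) = (\<Sum>q\<in>{Suc m..<?n}. A$?g m$?g q * x$?g q)"
            using m(1) skew_diag[OF A] by (simp add: sum.atLeast_Suc_lessThan)
          finally show ?thesis by (simp add: atLeast0LessThan)
        qed
        have skp: "\<And>p. A$?g p$?g m = - (A$?g m$?g p)" using skew_entry[OF A] by blast
        have F1: "?R $ ?g m = cdiag m A * x$?g m + ((\<Sum>q\<in>{Suc m..<?n}. A$?g m$?g q * (x$?g m + x$?g q))
             - (\<Sum>p<m. A$?g p$?g m * (x$?g p + x$?g m)))"
          by (simp only: R1 D O1 O2 O3)
        have F2: "cdiag m A * x$?g m + ((\<Sum>q\<in>{Suc m..<?n}. A$?g m$?g q * (x$?g m + x$?g q))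
             - (\<Sum>p<m. A$?g p$?g m * (x$?g p + x$?g m)))
           = (\<Sum>p<m. A$?g m$?g p * x$?g p) + (\<Sum>q\<in>{Suc m..<?n}. A$?g m$?g q * x$?g q)"
          unfolding cdiag_def skp
          by (simp add: sum.distrib sum_distrib_left sum_distrib_right distrib_left distrib_right
              sum_negf sum_subtractf algebra_simps)
        have fin: "?R $ ?g m = (\<Sum>q<?n. A$?g m$?g q * x$?g q)"
          using F1 F2 L by simp
        thus "(A *v x) $ i = ?R $ i" unfolding m(2)[symmetric] genum_mv by (rule sym)
      qed
    qed
  qed
qed


lemma sum_tri: "2 * (\<Sum>p<n. (n - p)) = n * (n + 1::nat)"
proof (induction n)
  case 0 then show ?case by simp
next
  case (Suc n)
  have "(\<Sum>p<Suc n. (Suc n - p)) = (\<Sum>p<n. (n - p) + 1) + 1"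
    by (simp add: Suc_diff_le)
  also have "\<dots> = (\<Sum>p<n. (n - p)) + n + 1" unfolding sum.distrib by simp
  finally show ?case using Suc.IH by (simp add: algebra_simps)
qed

lemma card_tri: "2 * card (SIGMA p:{..<n}. {p..<n}) = n * (n + 1)"
  by (simp add: card_SigmaI sum_tri)

lemma card_off: "card (SIGMA p:{..<n}. {..<n} - {p}) = n * (n - 1)"
  by (simp add: card_SigmaI)

lemma ceil_bound: "\<lceil>(real n - 1) / 2\<rceil> \<le> int n div 2"
proof -
  have "(real n - 1) / 2 \<le> real_of_int (int n div 2)"
  proof (cases "even n")
    case True then obtain k where "n = 2 * k" by blast
    thus ?thesis by simp
  next
    case False then obtain k where "n = 2 * k + 1" using oddE by blast
    thus ?thesis by simp
  qed
  thus ?thesis by (simp add: ceiling_le_iff)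
qed

theorem mainTheorem17:
  assumes "CARD('n::finite) \<ge> 2"
  shows "int (skew_mv_rank TYPE('n))
           \<le> int (CARD('n))^2 - int (CARD('n)) - \<lceil>(real (CARD('n)) - 1) / 2\<rceil> + 1"
proof -
  let ?n = "CARD('n)"
  have cb: "\<lceil>(real ?n - 1) / 2\<rceil> \<le> int ?n div 2" by (rule ceil_bound)
  show ?thesis
  proof (cases "?n = 2")
    case True
    have "skew_mv_rank TYPE('n) \<le> card (SIGMA p:{..<?n}. {..<?n} - {p})"
      by (rule rank_le[OF trivial_decomp])
    hence "int (skew_mv_rank TYPE('n)) \<le> 2" using card_off[of ?n] True by simp
    moreover have "int ?n = 2" using True by simp
    moreover have "int ?n ^ 2 = 4" using True by simp
    ultimately show ?thesis using cb by linarith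
  next
    case False
    hence n3: "?n \<ge> 3" using assms by simp
    have r: "skew_mv_rank TYPE('n) \<le> card (SIGMA p:{..<?n}. {p..<?n})"
      by (rule rank_le[OF tri_decomp])
    have c: "2 * int (card (SIGMA p:{..<?n}. {p..<?n})) = int ?n * (int ?n + 1)"
      using card_tri[of ?n] by (metis of_nat_add of_nat_mult of_nat_1 of_nat_numeral)
    have key: "int ?n * (int ?n + 1) \<le> 2 * (int ?n ^ 2 - int ?n - int ?n div 2 + 1)"
    proof (cases "even ?n")
      case True then obtain k where k: "?n = 2 * k" by blast
      hence "k \<ge> 2" using n3 by simp
      hence "0 \<le> int k * (int k - 2)" by simp
      thus ?thesis unfolding k by (simp add: power2_eq_square algebra_simps)
    next
      case False then obtain k where k: "?n = 2 * k + 1" using oddE by blast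
      have "0 \<le> int k * (int k - 1)" by (cases k) auto
      thus ?thesis unfolding k by (simp add: power2_eq_square algebra_simps)
    qed
    have r': "int (skew_mv_rank TYPE('n)) \<le> int (card (SIGMA p:{..<?n}. {p..<?n}))" using r by (simp only: of_nat_le_iff)
    have h2: "2 * int (skew_mv_rank TYPE('n)) \<le> 2 * ((int ?n)^2 - int ?n - int ?n div 2 + 1)"
      using r' c key by linarith
    have half: "\<And>a b::int. 2 * a \<le> 2 * b \<Longrightarrow> a \<le> b" by simp
    have "int (skew_mv_rank TYPE('n)) \<le> (int ?n)^2 - int ?n - int ?n div 2 + 1" by (rule half[OF h2])
    thus ?thesis using cb by linarith
  qed
qed

end
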